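(* Let $k\ge1$ and let $T_1,\dots,T_k$ be independent exponential random variables with parameters $\lambda_i=4\sqrt{i+1}$. Then for any $t>0$, $$\mathbf P\big(\|I^0_t\|_2>k\big)\le 4^k\,\mathbf P\Big(\sum_{i=1}^kT_i<t\Big).$$
   Context: $\mathbb{H}=\{(x_1,x_2)\in\mathbb{Z}^2:x_2\ge0\}$. To each directed nearest-neighbour edge $x\to y$ in $\mathbb{H}$ attach an independent Poisson process $N^{x\to y}$ of intensity $\max(\sqrt{x_2},1)$. $I^0_t$ is the set of $y\in\mathbb{H}$ such that there are a nearest-neighbour path $0=y_0,y_1,\dots,y_m=y$ in $\mathbb{H}$ and times $0<s_1<\dots<s_m\le t$ with $N^{y_{i-1}\to y_i}$ having an arrival at time $s_i$ for each $i$ (the interface process started from the origin). For finite $A\subset\mathbb{H}$, $\|A\|_2=\max_{x\in A}\|x\|_2$ (Euclidean norm). *)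

theory Defs
  imports "HOL-Probability.Probability"
begin

type_synonym site = "int \<times> int"

definition inH :: "site \<Rightarrow> bool" where
  "inH x \<longleftrightarrow> snd x \<ge> 0"

definition nn :: "site \<Rightarrow> site \<Rightarrow> bool" where
  "nn x y \<longleftrightarrow> \<bar>fst x - fst y\<bar> + \<bar>snd x - snd y\<bar> = 1"

definition Hedge :: "site \<times> site \<Rightarrow> bool" where
  "Hedge e \<longleftrightarrow> inH (fst e) \<and> inH (snd e) \<and> nn (fst e) (snd e)"

definition rate :: "site \<times> site \<Rightarrow> real" where
  "rate e = max (sqrt (real_of_int (snd (fst e)))) 1"

definition cnt :: "real set \<Rightarrow> real \<Rightarrow> real \<Rightarrow> nat" where
  "cnt S a b = card (S \<inter> {a<..b})"

text \<open>N e \<omega> is the (random) set of arrival times of the process attached to edge e.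
  The family (N e) over the directed edges of H is a family of independent Poisson
  processes on (0,\<infinity>) with intensities rate e: arrival sets are locally finite subsets
  of (0,\<infinity>), and for every finite family of edge/interval pairs, with intervals
  attached to the same edge pairwise disjoint, the counts are independent and
  Poisson distributed with mean rate e * (b - a).\<close>
definition indep_poisson_family ::
  "'a measure \<Rightarrow> (site \<times> site \<Rightarrow> 'a \<Rightarrow> real set) \<Rightarrow> bool" where
  "indep_poisson_family M N \<longleftrightarrow>
     (\<forall>e \<omega>. Hedge e \<longrightarrow> \<omega> \<in> space M \<longrightarrow>
        N e \<omega> \<subseteq> {0<..} \<and> (\<forall>b. finite (N e \<omega> \<inter> {..b}))) \<and>
     (\<forall>J :: ((site \<times> site) \<times> real \<times> real) set.
        finite J \<longrightarrow>
        (\<forall>(e, a, b) \<in> J. Hedge e \<and> 0 \<le> a \<and> a < b) \<longrightarrow>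
        (\<forall>(e, a, b) \<in> J. \<forall>(e', a', b') \<in> J. (e, a, b) \<noteq> (e', a', b') \<longrightarrow> e = e' \<longrightarrow>
            {a<..b} \<inter> {a'<..b'} = {}) \<longrightarrow>
        prob_space.indep_vars M (\<lambda>_. count_space UNIV)
           (\<lambda>(e, a, b) \<omega>. cnt (N e \<omega>) a b) J \<and>
        (\<forall>(e, a, b) \<in> J.
           distr M (count_space UNIV) (\<lambda>\<omega>. cnt (N e \<omega>) a b)
             = measure_pmf (poisson_pmf (rate e * (b - a)))))"

definition interface :: "(site \<times> site \<Rightarrow> 'a \<Rightarrow> real set) \<Rightarrow> real \<Rightarrow> 'a \<Rightarrow> site set" where
  "interface N t \<omega> = {y. \<exists>ys ss.
      length ys = Suc (length ss) \<and> hd ys = (0, 0) \<and> last ys = y \<and>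
      (\<forall>z \<in> set ys. inH z) \<and>
      (\<forall>i < length ss. nn (ys ! i) (ys ! Suc i)) \<and>
      (\<forall>i < length ss. 0 < ss ! i \<and> ss ! i \<le> t \<and>
          ss ! i \<in> N (ys ! i, ys ! Suc i) \<omega>) \<and>
      (\<forall>i. Suc i < length ss \<longrightarrow> ss ! i < ss ! Suc i)}"

definition enorm :: "site \<Rightarrow> real" where
  "enorm x = sqrt (real_of_int (fst x) ^ 2 + real_of_int (snd x) ^ 2)"

end

theory Submission
  imports Defs
begin

lemma poisson_indep_prod:
  fixes M :: "'a measure" and N :: "site \<times> site \<Rightarrow> 'a \<Rightarrow> real set"
    and f :: "'i \<Rightarrow> (site \<times> site) \<times> real \<times> real" and A :: "'i \<Rightarrow> nat set"
  assumes PS: "prob_space M" and PF: "indep_poisson_family M N"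
    and fin: "finite I" and inj: "inj_on f I"
    and good: "\<And>x. x \<in> I \<Longrightarrow> Hedge (fst (f x)) \<and> 0 \<le> fst (snd (f x)) \<and> fst (snd (f x)) < snd (snd (f x))"
    and disj: "\<And>x y. x \<in> I \<Longrightarrow> y \<in> I \<Longrightarrow> x \<noteq> y \<Longrightarrow> fst (f x) = fst (f y) \<Longrightarrow>
         {fst (snd (f x))<..snd (snd (f x))} \<inter> {fst (snd (f y))<..snd (snd (f y))} = {}"
  shows "{\<omega> \<in> space M. \<forall>x\<in>I. cnt (N (fst (f x)) \<omega>) (fst (snd (f x))) (snd (snd (f x))) \<in> A x} \<in> sets M
    \<and> measure M {\<omega> \<in> space M. \<forall>x\<in>I. cnt (N (fst (f x)) \<omega>) (fst (snd (f x))) (snd (snd (f x))) \<in> A x}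
      = (\<Prod>x\<in>I. measure (measure_pmf (poisson_pmf (rate (fst (f x)) * (snd (snd (f x)) - fst (snd (f x)))))) (A x))"
proof -
  interpret prob_space M by (rule PS)
  define J where "J = f ` I"
  define X where "X = (\<lambda>(e, a, b) \<omega>. cnt (N e \<omega>) a b)"
  have finJ: "finite J" using fin J_def by simp
  have condJ: "\<forall>(e, a, b) \<in> J. Hedge e \<and> 0 \<le> a \<and> a < b"
    unfolding J_def
  proof (intro ballI, clarify)
    fix e a b x assume "x \<in> I" "(e, a, b) = f x"
    then show "Hedge e \<and> 0 \<le> a \<and> a < b" using good[of x] by (metis fst_conv snd_conv)
  qed
  have cJ2: "\<forall>p\<in>J. \<forall>p'\<in>J. p \<noteq> p' \<longrightarrow> fst p = fst p' \<longrightarrow>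
      {fst (snd p)<..snd (snd p)} \<inter> {fst (snd p')<..snd (snd p')} = {}"
  proof (intro ballI impI)
    fix p p' assume pp: "p \<in> J" "p' \<in> J" "p \<noteq> p'" "fst p = fst p'"
    from pp(1) obtain x where x: "x \<in> I" "p = f x" unfolding J_def by blast
    from pp(2) obtain y where y: "y \<in> I" "p' = f y" unfolding J_def by blast
    show "{fst (snd p)<..snd (snd p)} \<inter> {fst (snd p')<..snd (snd p')} = {}"
      using disj[of x y] x y pp(3,4) by blast
  qed
  have condJ2: "\<forall>(e, a, b) \<in> J. \<forall>(e', a', b') \<in> J. (e, a, b) \<noteq> (e', a', b') \<longrightarrow> e = e' \<longrightarrow>
            {a<..b} \<inter> {a'<..b'} = {}"
    using cJ2 unfolding Ball_def by (simp only: split_paired_All case_prod_conv fst_conv snd_conv)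
  have PFJ: "indep_vars (\<lambda>_. count_space UNIV) X J \<and>
        (\<forall>(e, a, b) \<in> J. distr M (count_space UNIV) (\<lambda>\<omega>. cnt (N e \<omega>) a b)
             = measure_pmf (poisson_pmf (rate e * (b - a))))"
    using mp[OF mp[OF mp[OF spec[OF conjunct2[OF PF[unfolded indep_poisson_family_def]], of J] finJ] condJ] condJ2]
    unfolding X_def by simp
  then have ind: "indep_vars (\<lambda>_. count_space UNIV) X J" by blast
  have rv: "\<And>j. j \<in> J \<Longrightarrow> X j \<in> measurable M (count_space UNIV)"
    using ind unfolding indep_vars_def by blast
  have dist: "\<And>x. x \<in> I \<Longrightarrow> distr M (count_space UNIV) (X (f x))
       = measure_pmf (poisson_pmf (rate (fst (f x)) * (snd (snd (f x)) - fst (snd (f x)))))"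
    using PFJ unfolding J_def X_def by (force split: prod.splits)
  have Xf: "\<And>x \<omega>. X (f x) \<omega> = cnt (N (fst (f x)) \<omega>) (fst (snd (f x))) (snd (snd (f x)))"
    unfolding X_def by (simp split: prod.splits)
  define B where "B = (\<lambda>j. A (inv_into I f j))"
  have E: "{\<omega> \<in> space M. \<forall>x\<in>I. cnt (N (fst (f x)) \<omega>) (fst (snd (f x))) (snd (snd (f x))) \<in> A x}
     = space M \<inter> (\<Inter>x\<in>I. X (f x) -` A x \<inter> space M)"
    by (simp only: Xf[symmetric]) blast
  have mx: "\<And>x. x \<in> I \<Longrightarrow> X (f x) -` A x \<inter> space M \<in> sets M"
    using rv J_def by (auto intro!: measurable_sets)
  show ?thesis
  proof (cases "I = {}")
    case True
    then show ?thesis by (simp add: prob_space)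
  next
    case False
    have eq2: "space M \<inter> (\<Inter>x\<in>I. X (f x) -` A x \<inter> space M) = (\<Inter>j\<in>J. X j -` B j \<inter> space M)"
      unfolding J_def B_def using False inj by (auto simp: inv_into_f_f)
    have "prob (\<Inter>j\<in>J. X j -` B j \<inter> space M) = (\<Prod>j\<in>J. prob (X j -` B j \<inter> space M))"
      using False finJ J_def by (intro indep_varsD_finite[OF ind]) auto
    also have "\<dots> = (\<Prod>x\<in>I. prob (X (f x) -` A x \<inter> space M))"
      unfolding J_def B_def using inj by (simp add: prod.reindex)
    also have "\<dots> = (\<Prod>x\<in>I. measure (measure_pmf (poisson_pmf (rate (fst (f x)) * (snd (snd (f x)) - fst (snd (f x)))))) (A x))"
    proof (rule prod.cong[OF refl])
      fix x assume x: "x \<in> I"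
      have "prob (X (f x) -` A x \<inter> space M) = measure (distr M (count_space UNIV) (X (f x))) (A x)"
        using rv x J_def by (subst measure_distr) auto
      then show "prob (X (f x) -` A x \<inter> space M) = measure (measure_pmf (poisson_pmf (rate (fst (f x)) * (snd (snd (f x)) - fst (snd (f x)))))) (A x)"
        using dist[OF x] by simp
    qed
    finally have pr: "prob (\<Inter>j\<in>J. X j -` B j \<inter> space M) = (\<Prod>x\<in>I. measure (measure_pmf (poisson_pmf (rate (fst (f x)) * (snd (snd (f x)) - fst (snd (f x)))))) (A x))" .
    have ms: "space M \<inter> (\<Inter>x\<in>I. X (f x) -` A x \<inter> space M) \<in> sets M"
      by (rule sets.Int[OF sets.top], rule sets.finite_INT) (use mx fin False in auto)
    show ?thesis unfolding E using ms pr eq2 by simp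
  qed
qed

definition dirs :: "site set" where
  "dirs = {(1,0), (-1,0), (0,1), (0,-1)}"

fun walks :: "nat \<Rightarrow> site list set" where
  "walks 0 = {[(0,0)]}"
| "walks (Suc m) = (\<lambda>(g, d). g @ [(fst (last g) + fst d, snd (last g) + snd d)]) ` (walks m \<times> dirs)"

lemma card_dirs: "card dirs = 4"
  unfolding dirs_def by simp

lemma finite_walks: "finite (walks m)"
  by (induction m) (auto simp: dirs_def)

lemma card_walks: "card (walks m) \<le> 4 ^ m"
proof (induction m)
  case 0
  then show ?case by simp
next
  case (Suc m)
  have "card (walks (Suc m)) \<le> card (walks m \<times> dirs)"
    unfolding walks.simps by (rule card_image_le) (simp add: finite_walks dirs_def)
  also have "\<dots> = card (walks m) * 4"
    by (simp add: card_cartesian_product card_dirs)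
  also have "\<dots> \<le> 4 ^ Suc m" using Suc by simp
  finally show ?case .
qed

lemma nn_dirs: "nn x y \<Longrightarrow> (fst y - fst x, snd y - snd x) \<in> dirs"
  unfolding nn_def dirs_def by (cases x, cases y) (auto simp: abs_if split: if_splits)

lemma walks_mem:
  assumes "Y 0 = (0,0)" "\<And>l. l < m \<Longrightarrow> nn (Y l) (Y (Suc l))"
  shows "map Y [0..<Suc m] \<in> walks m"
  using assms(2)
proof (induction m)
  case 0
  then show ?case using assms(1) by simp
next
  case (Suc m)
  have IH: "map Y [0..<Suc m] \<in> walks m" using Suc by simp
  have d: "(fst (Y (Suc m)) - fst (Y m), snd (Y (Suc m)) - snd (Y m)) \<in> dirs"
    using Suc.prems[of m] nn_dirs by simp
  have "map Y [0..<Suc (Suc m)] = map Y [0..<Suc m] @ [(fst (last (map Y [0..<Suc m])) + (fst (Y (Suc m)) - fst (Y m)),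
          snd (last (map Y [0..<Suc m])) + (snd (Y (Suc m)) - snd (Y m)))]"
    by simp
  then show ?case unfolding walks.simps using IH d
    by (intro image_eqI[where x="(map Y [0..<Suc m], (fst (Y (Suc m)) - fst (Y m), snd (Y (Suc m)) - snd (Y m)))"]) auto
qed

definition tpath :: "(site \<times> site \<Rightarrow> 'a \<Rightarrow> real set) \<Rightarrow> real \<Rightarrow> 'a \<Rightarrow> (nat \<Rightarrow> site) \<Rightarrow> (nat \<Rightarrow> real) \<Rightarrow> nat \<Rightarrow> bool" where
  "tpath N t \<omega> Y S m \<longleftrightarrow> Y 0 = (0,0) \<and> (\<forall>l\<le>m. inH (Y l)) \<and>
     (\<forall>l<m. nn (Y l) (Y (Suc l)) \<and> 0 < S l \<and> S l \<le> t \<and> S l \<in> N (Y l, Y (Suc l)) \<omega>) \<and>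
     (\<forall>l. Suc l < m \<longrightarrow> S l < S (Suc l))"

lemma smono_S:
  assumes "\<forall>l. Suc l < m \<longrightarrow> S l < S (Suc l)" "a < b" "b < m"
  shows "S a < (S b :: real)"
  using assms(2,3)
proof (induction b)
  case 0
  then show ?case by simp
next
  case (Suc b)
  have s: "S b < S (Suc b)" using assms(1) Suc.prems by blast
  show ?case
  proof (cases "a = b")
    case True
    then show ?thesis using s by simp
  next
    case False
    then have "S a < S b" using Suc by simp
    then show ?thesis using s by simp
  qed
qed

lemma interface_tpath:
  assumes "y \<in> interface N t \<omega>"
  shows "\<exists>Y S m. tpath N t \<omega> Y S m \<and> Y m = y"
proof -
  obtain ys ss where A: "length ys = Suc (length ss)" "hd ys = (0, 0)" "last ys = y"
      "\<forall>z \<in> set ys. inH z" "\<forall>i < length ss. nn (ys ! i) (ys ! Suc i)"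
      "\<forall>i < length ss. 0 < ss ! i \<and> ss ! i \<le> t \<and> ss ! i \<in> N (ys ! i, ys ! Suc i) \<omega>"
      "\<forall>i. Suc i < length ss \<longrightarrow> ss ! i < ss ! Suc i"
    using assms unfolding interface_def by blast
  have ne: "ys \<noteq> []" using A(1) by auto
  have "tpath N t \<omega> ((!) ys) ((!) ss) (length ss)"
    unfolding tpath_def
  proof (intro conjI)
    show "ys ! 0 = (0, 0)" using A(2) ne by (simp add: hd_conv_nth)
    show "\<forall>l\<le>length ss. inH (ys ! l)" using A(1,4) by (auto simp: less_Suc_eq_le[symmetric])
  qed (use A in auto)
  moreover have "ys ! length ss = y" using A(1,3) ne by (simp add: last_conv_nth)
  ultimately show ?thesis by blast
qed

lemma tpath_L1:
  assumes "tpath N t \<omega> Y S m" "l \<le> m"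
  shows "\<bar>fst (Y l)\<bar> + \<bar>snd (Y l)\<bar> \<le> int l"
  using assms(2)
proof (induction l)
  case 0
  then show ?case using assms(1) by (simp add: tpath_def)
next
  case (Suc l)
  have "nn (Y l) (Y (Suc l))" using assms(1) Suc.prems by (simp add: tpath_def)
  then have "\<bar>fst (Y l) - fst (Y (Suc l))\<bar> + \<bar>snd (Y l) - snd (Y (Suc l))\<bar> = 1" by (simp add: nn_def)
  then show ?case using Suc by linarith
qed

lemma enorm_le: "enorm x \<le> real_of_int (\<bar>fst x\<bar> + \<bar>snd x\<bar>)"
proof -
  define a where "a = real_of_int (fst x)"
  define b where "b = real_of_int (snd x)"
  have e: "(\<bar>a\<bar> + \<bar>b\<bar>)\<^sup>2 = a\<^sup>2 + b\<^sup>2 + 2 * \<bar>a\<bar> * \<bar>b\<bar>"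
    by (simp only: power2_sum power2_abs)
  have "0 \<le> 2 * \<bar>a\<bar> * \<bar>b\<bar>" by simp
  then have "a\<^sup>2 + b\<^sup>2 \<le> (\<bar>a\<bar> + \<bar>b\<bar>)\<^sup>2" using e by linarith
  then have "sqrt (a\<^sup>2 + b\<^sup>2) \<le> sqrt ((\<bar>a\<bar> + \<bar>b\<bar>)\<^sup>2)"
    by (rule real_sqrt_le_mono)
  also have "\<dots> = \<bar>a\<bar> + \<bar>b\<bar>" by simp
  finally show ?thesis unfolding enorm_def a_def b_def by simp
qed

lemma tpath_mono: "tpath N t \<omega> Y S m \<Longrightarrow> k \<le> m \<Longrightarrow> tpath N t \<omega> Y S k"
  unfolding tpath_def by auto

lemma tpath_shortcut:
  assumes tp: "tpath N t \<omega> Y S m" and ij: "i < j" "j \<le> m" and eq: "Y i = Y j"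
  defines "d \<equiv> j - i"
  shows "tpath N t \<omega> (\<lambda>l. if l \<le> i then Y l else Y (l + d)) (\<lambda>l. if l < i then S l else S (l + d)) (m - d)
     \<and> (\<lambda>l. if l \<le> i then Y l else Y (l + d)) (m - d) = Y m"
proof -
  have d: "d > 0" "i + d = j" using ij d_def by auto
  have T: "Y 0 = (0,0)" "\<forall>l\<le>m. inH (Y l)"
     "\<forall>l<m. nn (Y l) (Y (Suc l)) \<and> 0 < S l \<and> S l \<le> t \<and> S l \<in> N (Y l, Y (Suc l)) \<omega>"
     "\<forall>l. Suc l < m \<longrightarrow> S l < S (Suc l)"
    using tp unfolding tpath_def by auto
  define Y' where "Y' = (\<lambda>l. if l \<le> i then Y l else Y (l + d))"
  define S' where "S' = (\<lambda>l. if l < i then S l else S (l + d))"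
  have "tpath N t \<omega> Y' S' (m - d)"
    unfolding tpath_def
  proof (intro conjI allI impI)
    show "Y' 0 = (0,0)" using T(1) by (simp add: Y'_def)
  next
    fix l assume "l \<le> m - d"
    then show "inH (Y' l)" using T(2) d ij by (auto simp: Y'_def)
  next
    fix l assume l: "l < m - d"
    have "nn (Y' l) (Y' (Suc l)) \<and> 0 < S' l \<and> S' l \<le> t \<and> S' l \<in> N (Y' l, Y' (Suc l)) \<omega>"
    proof (cases "l < i")
      case True
      then show ?thesis using T(3)[rule_format, of l] ij by (auto simp: Y'_def S'_def)
    next
      case False
      then have "Y' l = Y (l + d)" "Y' (Suc l) = Y (Suc (l + d))" "S' l = S (l + d)"
        using eq d by (auto simp: Y'_def S'_def)
      moreover have "l + d < m" using l d by auto
      ultimately show ?thesis using T(3) by auto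
    qed
    then show "nn (Y' l) (Y' (Suc l))" "0 < S' l" "S' l \<le> t" "S' l \<in> N (Y' l, Y' (Suc l)) \<omega>"
      by auto
  next
    fix l assume l: "Suc l < m - d"
    show "S' l < S' (Suc l)"
    proof (cases "Suc l < i")
      case True
      then show ?thesis using T(4) ij by (auto simp: S'_def)
    next
      case False
      show ?thesis
      proof (cases "l < i")
        case True
        then have "S' l = S l" "S' (Suc l) = S (Suc l + d)" using False by (auto simp: S'_def)
        moreover have "S l < S (Suc l + d)" using l d True by (intro smono_S[OF T(4)]) auto
        ultimately show ?thesis by simp
      next
        case False
        then have "S' l = S (l + d)" "S' (Suc l) = S (Suc (l + d))" by (auto simp: S'_def)
        then show ?thesis using T(4) l d by auto
      qed
    qed
  qed
  moreover have "Y' (m - d) = Y m"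
  proof (cases "m - d \<le> i")
    case True
    then have "m = j" using d ij by auto
    then show ?thesis using True eq d by (auto simp: Y'_def)
  next
    case False
    then show ?thesis using d ij by (auto simp: Y'_def)
  qed
  ultimately show ?thesis unfolding Y'_def S'_def by blast
qed

lemma path_extract:
  assumes "y \<in> interface N t \<omega>" "enorm y > real k"
  shows "\<exists>Y S. tpath N t \<omega> Y S k \<and> inj_on Y {0..k}"
proof -
  define Q where "Q = (\<lambda>m. \<exists>Y S. tpath N t \<omega> Y S m \<and> enorm (Y m) > real k)"
  have "\<exists>m. Q m" using interface_tpath[OF assms(1)] assms(2) unfolding Q_def by blast
  then have Qm: "Q (LEAST m. Q m)" by (rule LeastI_ex)
  define m0 where "m0 = (LEAST m. Q m)"
  obtain Y S where tp: "tpath N t \<omega> Y S m0" and en: "enorm (Y m0) > real k"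
    using Qm unfolding Q_def m0_def by blast
  have inj: "inj_on Y {0..m0}"
  proof (rule ccontr)
    assume "\<not> inj_on Y {0..m0}"
    then obtain a b where ab: "a \<le> m0" "b \<le> m0" "a \<noteq> b" "Y a = Y b"
      unfolding inj_on_def by auto
    have "\<exists>i j. i < j \<and> j \<le> m0 \<and> Y i = Y j"
    proof (cases "a < b")
      case True
      then show ?thesis using ab by blast
    next
      case False
      then have "b < a" using ab(3) by simp
      then show ?thesis using ab by (intro exI[of _ b] exI[of _ a]) simp
    qed
    then obtain i j where ij: "i < j" "j \<le> m0" "Y i = Y j" by blast
    obtain Y' S' where YS: "tpath N t \<omega> Y' S' (m0 - (j - i))" "Y' (m0 - (j - i)) = Y m0"
      using tpath_shortcut[OF tp ij] by blast
    have "Q (m0 - (j - i))" unfolding Q_def using YS en by auto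
    moreover have "m0 - (j - i) < m0" using ij by auto
    ultimately show False using not_less_Least unfolding m0_def by blast
  qed
  have "real k < real m0"
    using en enorm_le[of "Y m0"] tpath_L1[OF tp, of m0] by linarith
  then have "k \<le> m0" by simp
  then show ?thesis using tpath_mono[OF tp] inj by (meson atLeastAtMost_iff inj_on_subset subsetI le_trans)
qed

definition Gs :: "(nat \<Rightarrow> nat) \<Rightarrow> nat \<Rightarrow> nat" where
  "Gs w i = (\<Sum>l = 1..i. w l)"

definition Wset :: "nat \<Rightarrow> nat \<Rightarrow> (nat \<Rightarrow> nat) set" where
  "Wset n k = {w \<in> {1..k} \<rightarrow>\<^sub>E {..<n}. sum w {1..k} \<le> n - 1}"

lemma finite_Wset: "finite (Wset n k)"
  unfolding Wset_def by (rule finite_subset[of _ "{1..k} \<rightarrow>\<^sub>E {..<n}"]) (auto intro: finite_PiE)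

fun gsl :: "(nat \<Rightarrow> real set) \<Rightarrow> real \<Rightarrow> nat \<Rightarrow> nat" where
  "gsl Ns h 0 = 0"
| "gsl Ns h (Suc i) = (LEAST s. gsl Ns h i \<le> s \<and> Ns (Suc i) \<inter> {real (gsl Ns h i) * h <.. (real s + 1) * h} \<noteq> {})"

lemma slot_props:
  fixes h x :: real and n :: nat
  assumes "h > 0" "0 < x" "x \<le> real n * h"
  shows "real (nat \<lceil>x / h\<rceil> - 1) * h < x \<and> x \<le> (real (nat \<lceil>x / h\<rceil> - 1) + 1) * h \<and> nat \<lceil>x / h\<rceil> - 1 \<le> n - 1"
proof -
  define c where "c = \<lceil>x / h\<rceil>"
  have xh: "0 < x / h" using assms by simp
  have c1: "1 \<le> c" using xh unfolding c_def by (simp add: ceiling_le_iff[symmetric])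
  have "c - 1 < x / h" "x / h \<le> c" unfolding c_def by linarith+
  then have a: "(c - 1) * h < x" "x \<le> c * h" using assms(1) by (simp_all add: field_simps)
  have r: "real (nat c - 1) = real_of_int c - 1" using c1 by (simp add: of_nat_diff)
  have "x / h \<le> real n" using assms by (simp add: field_simps)
  then have "c \<le> int n" unfolding c_def by (simp add: ceiling_le_iff)
  then have "nat c - 1 \<le> n - 1" by linarith
  then show ?thesis unfolding c_def[symmetric] r using a by (simp add: algebra_simps)
qed

lemma slots:
  fixes Ns :: "nat \<Rightarrow> real set" and \<tau> :: "nat \<Rightarrow> real" and h :: real and n k :: nat
  assumes h: "h > 0" and n: "n \<ge> 1"
    and tau: "\<And>i. i \<in> {1..k} \<Longrightarrow> \<tau> i \<in> Ns i \<and> 0 < \<tau> i \<and> \<tau> i \<le> real n * h"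
    and incr: "\<And>i. 1 \<le> i \<Longrightarrow> Suc i \<le> k \<Longrightarrow> \<tau> i < \<tau> (Suc i)"
  shows "\<exists>w\<in>Wset n k. \<forall>i\<in>{1..k}.
     (0 < w i \<longrightarrow> Ns i \<inter> {real (Gs w (i - 1)) * h <.. real (Gs w i) * h} = {}) \<and>
     Ns i \<inter> {real (Gs w i) * h <.. (real (Gs w i) + 1) * h} \<noteq> {}"
proof -
  define sl where "sl = (\<lambda>i. nat \<lceil>\<tau> i / h\<rceil> - 1)"
  have slp: "\<And>i. i \<in> {1..k} \<Longrightarrow> real (sl i) * h < \<tau> i \<and> \<tau> i \<le> (real (sl i) + 1) * h \<and> sl i \<le> n - 1"
    unfolding sl_def using tau h by (intro slot_props) auto
  have slmono: "\<And>i. 1 \<le> i \<Longrightarrow> Suc i \<le> k \<Longrightarrow> sl i \<le> sl (Suc i)"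
  proof -
    fix i assume i: "1 \<le> i" "Suc i \<le> k"
    have "\<tau> i / h \<le> \<tau> (Suc i) / h" using incr[OF i] h by (simp add: divide_right_mono)
    then have "\<lceil>\<tau> i / h\<rceil> \<le> \<lceil>\<tau> (Suc i) / h\<rceil>" by (rule ceiling_mono)
    then show "sl i \<le> sl (Suc i)" unfolding sl_def by linarith
  qed
  define g where "g = gsl Ns h"
  have g0: "g 0 = 0" unfolding g_def by simp
  have gS: "\<And>i. g (Suc i) = (LEAST s. g i \<le> s \<and> Ns (Suc i) \<inter> {real (g i) * h <.. (real s + 1) * h} \<noteq> {})"
    unfolding g_def by simp
  have step: "g i \<le> g (Suc i) \<and> g (Suc i) \<le> sl (Suc i) \<and>
      (g i < g (Suc i) \<longrightarrow> Ns (Suc i) \<inter> {real (g i) * h <.. real (g (Suc i)) * h} = {}) \<and>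
      Ns (Suc i) \<inter> {real (g (Suc i)) * h <.. (real (g (Suc i)) + 1) * h} \<noteq> {}"
    if i1: "Suc i \<le> k" and i2: "g i \<le> sl (Suc i)" for i
  proof -
    define P where "P = (\<lambda>s. g i \<le> s \<and> Ns (Suc i) \<inter> {real (g i) * h <.. (real s + 1) * h} \<noteq> {})"
    have gSP: "g (Suc i) = (LEAST s. P s)" unfolding P_def by (rule gS)
    have si: "Suc i \<in> {1..k}" using i1 by simp
    have "real (g i) * h \<le> real (sl (Suc i)) * h" using i2 h by (simp add: mult_right_mono)
    then have "\<tau> (Suc i) \<in> Ns (Suc i) \<inter> {real (g i) * h <.. (real (sl (Suc i)) + 1) * h}"
      using slp[OF si] tau[OF si] by auto
    then have Psl: "P (sl (Suc i))" unfolding P_def using i2 by blast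
    have Pg: "P (g (Suc i))" unfolding gSP by (rule LeastI[of P, OF Psl])
    have le: "g (Suc i) \<le> sl (Suc i)" unfolding gSP by (rule Least_le[of P, OF Psl])
    have gi: "g i \<le> g (Suc i)" using Pg unfolding P_def by blast
    have emp: "Ns (Suc i) \<inter> {real (g i) * h <.. real (g (Suc i)) * h} = {}" if lt: "g i < g (Suc i)"
    proof -
      have "\<not> P (g (Suc i) - 1)" unfolding gSP
        by (rule not_less_Least) (use lt gSP in auto)
      moreover have "g i \<le> g (Suc i) - 1" using lt by simp
      moreover have "real (g (Suc i) - 1) + 1 = real (g (Suc i))" using lt by (simp add: of_nat_diff)
      ultimately show ?thesis unfolding P_def by auto
    qed
    obtain x where x: "x \<in> Ns (Suc i)" "real (g i) * h < x" "x \<le> (real (g (Suc i)) + 1) * h"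
      using Pg unfolding P_def by auto
    have "x \<in> Ns (Suc i) \<inter> {real (g (Suc i)) * h <.. (real (g (Suc i)) + 1) * h}"
    proof (cases "g i < g (Suc i)")
      case True
      then have "\<not> x \<le> real (g (Suc i)) * h" using emp x by auto
      then show ?thesis using x by auto
    next
      case False
      then have "g i = g (Suc i)" using gi by simp
      then show ?thesis using x by auto
    qed
    then show ?thesis using gi le emp by blast
  qed
  have bound: "Suc i \<le> k \<longrightarrow> g (Suc i) \<le> sl (Suc i)" for i
  proof (induction i)
    case 0
    then show ?case using step[of 0] g0 by simp
  next
    case (Suc i)
    show ?case
    proof
      assume a: "Suc (Suc i) \<le> k"
      then have "g (Suc i) \<le> sl (Suc (Suc i))"
        using Suc slmono[of "Suc i"] by simp
      then show "g (Suc (Suc i)) \<le> sl (Suc (Suc i))" using step[OF a] by blast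
    qed
  qed
  have props: "\<And>i. Suc i \<le> k \<Longrightarrow> g i \<le> g (Suc i) \<and> g (Suc i) \<le> sl (Suc i) \<and>
      (g i < g (Suc i) \<longrightarrow> Ns (Suc i) \<inter> {real (g i) * h <.. real (g (Suc i)) * h} = {}) \<and>
      Ns (Suc i) \<inter> {real (g (Suc i)) * h <.. (real (g (Suc i)) + 1) * h} \<noteq> {}"
  proof -
    fix i assume i: "Suc i \<le> k"
    have "g i \<le> sl (Suc i)"
    proof (cases i)
      case 0
      then show ?thesis using g0 by simp
    next
      case (Suc j)
      then show ?thesis using bound[of j] slmono[of i] i by simp
    qed
    then show "?thesis i" using step[OF i] by blast
  qed
  define w where "w = restrict (\<lambda>i. g i - g (i - 1)) {1..k}"
  have Gw: "i \<le> k \<Longrightarrow> Gs w i = g i" for i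
  proof (induction i)
    case 0
    then show ?case using g0 by (simp add: Gs_def)
  next
    case (Suc i)
    have "Gs w (Suc i) = Gs w i + w (Suc i)" unfolding Gs_def by simp
    also have "\<dots> = g i + (g (Suc i) - g i)"
    proof -
      have "Gs w i = g i" using Suc.IH Suc.prems by simp
      moreover have "w (Suc i) = g (Suc i) - g i" using Suc.prems by (simp add: w_def)
      ultimately show ?thesis by simp
    qed
    also have "\<dots> = g (Suc i)" using props[OF Suc.prems] by simp
    finally show ?case .
  qed
  have gsl_le: "i \<in> {1..k} \<Longrightarrow> g i \<le> n - 1" for i
    using bound[of "i - 1"] slp[of i] by (cases i) auto
  have wW: "w \<in> Wset n k"
    unfolding Wset_def
  proof (intro CollectI conjI)
    show "w \<in> {1..k} \<rightarrow>\<^sub>E {..<n}"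
    proof (rule PiE_I)
      fix i assume i: "i \<in> {1..k}"
      have "w i \<le> g i" using i by (simp add: w_def)
      then show "w i \<in> {..<n}" using gsl_le[OF i] n by auto
    qed (auto simp: w_def)
    have "sum w {1..k} = g k" using Gw[of k] by (simp add: Gs_def)
    then show "sum w {1..k} \<le> n - 1" using gsl_le[of k] g0 by (cases k) auto
  qed
  show ?thesis
  proof (intro bexI[OF _ wW] ballI)
    fix i assume i: "i \<in> {1..k}"
    then obtain j where j: "i = Suc j" "Suc j \<le> k" by (cases i) auto
    have "Gs w (i - 1) = g j" "Gs w i = g i" using Gw j by auto
    moreover have "w i = g i - g j" using i j by (simp add: w_def)
    ultimately show "(0 < w i \<longrightarrow> Ns i \<inter> {real (Gs w (i - 1)) * h <.. real (Gs w i) * h} = {}) \<and>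
      Ns i \<inter> {real (Gs w i) * h <.. (real (Gs w i) + 1) * h} \<noteq> {}"
      using props[OF j(2)] j by auto
  qed
qed

lemma poisson_zero:
  assumes "0 < \<mu>"
  shows "measure (measure_pmf (poisson_pmf \<mu>)) {0} = exp (- \<mu>)"
  using assms by (simp add: measure_pmf_single)

lemma poisson_pos:
  assumes "0 < \<mu>"
  shows "measure (measure_pmf (poisson_pmf \<mu>)) {1..} = 1 - exp (- \<mu>)"
proof -
  have e: "space (measure_pmf (poisson_pmf \<mu>)) - {0::nat} = {1..}" by auto
  have "measure (measure_pmf (poisson_pmf \<mu>)) (space (measure_pmf (poisson_pmf \<mu>)) - {0}) = 1 - measure (measure_pmf (poisson_pmf \<mu>)) {0}"
    by (rule measure_pmf.prob_compl) simp
  then have "measure (measure_pmf (poisson_pmf \<mu>)) {1..} = 1 - measure (measure_pmf (poisson_pmf \<mu>)) {0}"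
    by (simp only: e)
  then show ?thesis using poisson_zero[OF assms] by simp
qed

lemma rate_pos: "0 < rate e"
  unfolding rate_def by simp

lemma Gs_Suc: "Gs w (Suc j) = Gs w j + w (Suc j)"
  unfolding Gs_def by simp

definition ed :: "site list \<Rightarrow> nat \<Rightarrow> site \<times> site" where
  "ed \<gamma> i = (\<gamma> ! (i - 1), \<gamma> ! i)"

definition Ix :: "nat \<Rightarrow> (nat \<Rightarrow> nat) \<Rightarrow> (nat \<times> bool) set" where
  "Ix k w = (\<lambda>i. (i, True)) ` {1..k} \<union> (\<lambda>i. (i, False)) ` {i\<in>{1..k}. 0 < w i}"

definition fx :: "site list \<Rightarrow> real \<Rightarrow> (nat \<Rightarrow> nat) \<Rightarrow> nat \<times> bool \<Rightarrow> (site \<times> site) \<times> real \<times> real" where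
  "fx \<gamma> h w = (\<lambda>(i, b). if b then (ed \<gamma> i, real (Gs w i) * h, (real (Gs w i) + 1) * h)
                                    else (ed \<gamma> i, real (Gs w (i - 1)) * h, real (Gs w i) * h))"

definition Ax :: "nat \<times> bool \<Rightarrow> nat set" where
  "Ax = (\<lambda>(i::nat, b). if b then {1::nat..} else {0})"

definition Eset :: "'a measure \<Rightarrow> (site \<times> site \<Rightarrow> 'a \<Rightarrow> real set) \<Rightarrow> nat \<Rightarrow> site list \<Rightarrow> real \<Rightarrow> (nat \<Rightarrow> nat) \<Rightarrow> 'a set" where
  "Eset M N k \<gamma> h w = {\<omega> \<in> space M. \<forall>x\<in>Ix k w.
     cnt (N (fst (fx \<gamma> h w x)) \<omega>) (fst (snd (fx \<gamma> h w x))) (snd (snd (fx \<gamma> h w x))) \<in> Ax x}"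

lemma E_prob:
  fixes M :: "'a measure" and N :: "site \<times> site \<Rightarrow> 'a \<Rightarrow> real set"
  assumes PS: "prob_space M" and PF: "indep_poisson_family M N" and h: "0 < h"
    and He: "\<And>i. i \<in> {1..k} \<Longrightarrow> Hedge (ed \<gamma> i)"
    and inj: "inj_on (\<lambda>i. \<gamma> ! (i - 1)) {1..k}"
  shows "Eset M N k \<gamma> h w \<in> sets M \<and>
    measure M (Eset M N k \<gamma> h w) = (\<Prod>i\<in>{1..k}. exp (- (rate (ed \<gamma> i) * h)) ^ w i * (1 - exp (- (rate (ed \<gamma> i) * h))))"
proof -
  define I1 where "I1 = (\<lambda>i. (i, True)) ` {1..k}"
  define I0 where "I0 = (\<lambda>i. (i, False)) ` {i\<in>{1..k}. 0 < w i}"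
  define I where "I = Ix k w"
  have I_eq: "I = I1 \<union> I0" unfolding I_def Ix_def I1_def I0_def ..
  define f where "f = fx \<gamma> h w"
  have f_eq: "f = (\<lambda>(i, b). if b then (ed \<gamma> i, real (Gs w i) * h, (real (Gs w i) + 1) * h)
                                    else (ed \<gamma> i, real (Gs w (i - 1)) * h, real (Gs w i) * h))"
    unfolding f_def fx_def ..
  define A where "A = Ax"
  have A_eq: "A = (\<lambda>(i::nat, b). if b then {1::nat..} else {0})" unfolding A_def Ax_def ..
  have Gw: "i \<in> {1..k} \<Longrightarrow> Gs w i = Gs w (i - 1) + w i" for i
    using Gs_Suc[of w "i - 1"] by simp
  have finI: "finite I" unfolding I_eq I1_def I0_def by auto
  have edfst: "fst (ed \<gamma> i) = \<gamma> ! (i - 1)" for i by (simp add: ed_def)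
  have edeq: "i \<in> {1..k} \<Longrightarrow> i' \<in> {1..k} \<Longrightarrow> fst (ed \<gamma> i) = fst (ed \<gamma> i') \<Longrightarrow> i = i'" for i i'
    using inj unfolding edfst inj_on_def by blast
  have fI: "\<And>x. x \<in> I \<Longrightarrow> fst x \<in> {1..k} \<and> (snd x = False \<longrightarrow> 0 < w (fst x))"
    unfolding I_eq I1_def I0_def by auto
  have injf: "inj_on f I"
  proof (rule inj_onI)
    fix x y assume x: "x \<in> I" and y: "y \<in> I" and fxy: "f x = f y"
    obtain i b where xi: "x = (i, b)" by (cases x)
    obtain i' b' where yi: "y = (i', b')" by (cases y)
    have "fst (ed \<gamma> i) = fst (ed \<gamma> i')" using fxy unfolding xi yi f_eq by (auto split: if_splits)
    then have ii: "i = i'" using edeq fI[OF x] fI[OF y] xi yi by auto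
    show "x = y"
    proof (rule ccontr)
      assume "x \<noteq> y"
      then have "b \<noteq> b'" using xi yi ii by auto
      then have "real (Gs w i) * h = real (Gs w (i - 1)) * h"
        using fxy ii unfolding xi yi f_eq by (auto split: if_splits)
      then have "Gs w i = Gs w (i - 1)" using h by simp
      moreover have "0 < w i" using fI[OF x] fI[OF y] xi yi ii \<open>b \<noteq> b'\<close> by (cases b) auto
      ultimately show False using Gw fI[OF x] xi by auto
    qed
  qed
  have good: "\<And>x. x \<in> I \<Longrightarrow> Hedge (fst (f x)) \<and> 0 \<le> fst (snd (f x)) \<and> fst (snd (f x)) < snd (snd (f x))"
  proof -
    fix x assume x: "x \<in> I"
    obtain i b where xi: "x = (i, b)" by (cases x)
    have i: "i \<in> {1..k}" using fI[OF x] xi by simp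
    show "Hedge (fst (f x)) \<and> 0 \<le> fst (snd (f x)) \<and> fst (snd (f x)) < snd (snd (f x))"
    proof (cases b)
      case True
      then show ?thesis using He[OF i] h unfolding xi f_eq by simp
    next
      case False
      then have "0 < w i" using fI[OF x] xi by simp
      then have "Gs w (i - 1) < Gs w i" using Gw[OF i] by simp
      then have "real (Gs w (i - 1)) * h < real (Gs w i) * h" using h by simp
      then show ?thesis using He[OF i] h False unfolding xi f_eq by simp
    qed
  qed
  have disj: "\<And>x y. x \<in> I \<Longrightarrow> y \<in> I \<Longrightarrow> x \<noteq> y \<Longrightarrow> fst (f x) = fst (f y) \<Longrightarrow>
         {fst (snd (f x))<..snd (snd (f x))} \<inter> {fst (snd (f y))<..snd (snd (f y))} = {}"
  proof -
    fix x y assume x: "x \<in> I" and y: "y \<in> I" and xy: "x \<noteq> y" and fe: "fst (f x) = fst (f y)"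
    obtain i b where xi: "x = (i, b)" by (cases x)
    obtain i' b' where yi: "y = (i', b')" by (cases y)
    have "fst (ed \<gamma> i) = fst (ed \<gamma> i')" using fe unfolding xi yi f_eq by (auto split: if_splits)
    then have ii: "i = i'" using edeq fI[OF x] fI[OF y] xi yi by auto
    then have "b \<noteq> b'" using xy xi yi by auto
    then show "{fst (snd (f x))<..snd (snd (f x))} \<inter> {fst (snd (f y))<..snd (snd (f y))} = {}"
      unfolding xi yi f_eq using ii by (cases b) auto
  qed
  have seteq: "{\<omega> \<in> space M. \<forall>x\<in>I. cnt (N (fst (f x)) \<omega>) (fst (snd (f x))) (snd (snd (f x))) \<in> A x}
      = Eset M N k \<gamma> h w"
    unfolding Eset_def I_def f_def A_def by simp
  have prodeq: "(\<Prod>x\<in>I. measure (measure_pmf (poisson_pmf (rate (fst (f x)) * (snd (snd (f x)) - fst (snd (f x)))))) (A x))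
     = (\<Prod>i\<in>{1..k}. exp (- (rate (ed \<gamma> i) * h)) ^ w i * (1 - exp (- (rate (ed \<gamma> i) * h))))"
  proof -
    define F where "F = (\<lambda>x. measure (measure_pmf (poisson_pmf (rate (fst (f x)) * (snd (snd (f x)) - fst (snd (f x)))))) (A x))"
    define q where "q = (\<lambda>i. exp (- (rate (ed \<gamma> i) * h)))"
    have "(\<Prod>x\<in>I. F x) = (\<Prod>x\<in>I1. F x) * (\<Prod>x\<in>I0. F x)"
      unfolding I_eq by (rule prod.union_disjoint) (auto simp: I1_def I0_def)
    also have "(\<Prod>x\<in>I1. F x) = (\<Prod>i\<in>{1..k}. 1 - q i)"
      unfolding I1_def
    proof (subst prod.reindex)
      show "inj_on (\<lambda>i. (i, True)) {1..k}" by (auto simp: inj_on_def)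
      show "prod (F \<circ> (\<lambda>i. (i, True))) {1..k} = (\<Prod>i = 1..k. 1 - q i)"
      proof (rule prod.cong[OF refl])
        fix i assume i: "i \<in> {1..k}"
        have "(real (Gs w i) + 1) * h - real (Gs w i) * h = h" by (simp add: algebra_simps)
        then show "(F \<circ> (\<lambda>i. (i, True))) i = 1 - q i"
          unfolding F_def f_eq A_eq q_def using poisson_pos[of "rate (ed \<gamma> i) * h"] rate_pos h by simp
      qed
    qed
    also have "(\<Prod>x\<in>I0. F x) = (\<Prod>i\<in>{i\<in>{1..k}. 0 < w i}. q i ^ w i)"
      unfolding I0_def
    proof (subst prod.reindex)
      show "inj_on (\<lambda>i. (i, False)) {i\<in>{1..k}. 0 < w i}" by (auto simp: inj_on_def)
      show "prod (F \<circ> (\<lambda>i. (i, False))) {i\<in>{1..k}. 0 < w i} = (\<Prod>i\<in>{i\<in>{1..k}. 0 < w i}. q i ^ w i)"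
      proof (rule prod.cong[OF refl])
        fix i assume i: "i \<in> {i\<in>{1..k}. 0 < w i}"
        have "real (Gs w i) * h - real (Gs w (i - 1)) * h = real (w i) * h"
          using Gw[of i] i by (simp add: algebra_simps)
        moreover have "0 < rate (ed \<gamma> i) * (real (w i) * h)" using i h rate_pos by simp
        moreover have "exp (- (rate (ed \<gamma> i) * (real (w i) * h))) = q i ^ w i"
          unfolding q_def by (simp add: exp_of_nat_mult[symmetric] algebra_simps)
        ultimately show "(F \<circ> (\<lambda>i. (i, False))) i = q i ^ w i"
          unfolding F_def f_eq A_eq using poisson_zero by simp
      qed
    qed
    also have "(\<Prod>i\<in>{i\<in>{1..k}. 0 < w i}. q i ^ w i) = (\<Prod>i\<in>{1..k}. q i ^ w i)"
      by (rule prod.mono_neutral_left) auto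
    finally show ?thesis unfolding F_def q_def by (simp add: prod.distrib mult.commute)
  qed
  have main: "{\<omega> \<in> space M. \<forall>x\<in>I. cnt (N (fst (f x)) \<omega>) (fst (snd (f x))) (snd (snd (f x))) \<in> A x} \<in> sets M
    \<and> measure M {\<omega> \<in> space M. \<forall>x\<in>I. cnt (N (fst (f x)) \<omega>) (fst (snd (f x))) (snd (snd (f x))) \<in> A x}
      = (\<Prod>x\<in>I. measure (measure_pmf (poisson_pmf (rate (fst (f x)) * (snd (snd (f x)) - fst (snd (f x)))))) (A x))"
    by (rule poisson_indep_prod[OF PS PF finI injf good disj])
  from main have "Eset M N k \<gamma> h w \<in> sets M \<and> measure M (Eset M N k \<gamma> h w) =
     (\<Prod>x\<in>I. measure (measure_pmf (poisson_pmf (rate (fst (f x)) * (snd (snd (f x)) - fst (snd (f x)))))) (A x))"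
    by (simp only: seteq)
  then show ?thesis by (simp only: prodeq)
qed

lemma exp_interval:
  assumes PS: "prob_space P" and D: "distributed P lborel X (exponential_density l)"
    and l: "0 < l" and a: "0 \<le> a" and ab: "a \<le> b" and Xm: "X \<in> borel_measurable P"
  shows "measure P {\<omega> \<in> space P. X \<omega> \<in> {a<..b}} = exp (- a * l) - exp (- b * l)"
proof -
  interpret prob_space P by (rule PS)
  have m1: "{\<omega> \<in> space P. X \<omega> \<in> {a<..b}} \<in> sets P"
  proof -
    have "X -` {a<..b} \<inter> space P \<in> sets P" using Xm by (rule measurable_sets) simp
    moreover have "X -` {a<..b} \<inter> space P = {\<omega> \<in> space P. X \<omega> \<in> {a<..b}}" by auto
    ultimately show ?thesis by simp
  qed
  have m2: "{\<omega> \<in> space P. b < X \<omega>} \<in> sets P"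
  proof -
    have "X -` {b<..} \<inter> space P \<in> sets P" using Xm by (rule measurable_sets) simp
    moreover have "X -` {b<..} \<inter> space P = {\<omega> \<in> space P. b < X \<omega>}" by auto
    ultimately show ?thesis by simp
  qed
  have u: "{\<omega> \<in> space P. a < X \<omega>} = {\<omega> \<in> space P. X \<omega> \<in> {a<..b}} \<union> {\<omega> \<in> space P. b < X \<omega>}"
    using ab by auto
  have d: "{\<omega> \<in> space P. X \<omega> \<in> {a<..b}} \<inter> {\<omega> \<in> space P. b < X \<omega>} = {}" by auto
  have "measure P {\<omega> \<in> space P. a < X \<omega>} = measure P {\<omega> \<in> space P. X \<omega> \<in> {a<..b}} + measure P {\<omega> \<in> space P. b < X \<omega>}"
    unfolding u by (rule finite_measure_Union[OF m1 m2 d])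
  moreover have "measure P {\<omega> \<in> space P. a < X \<omega>} = exp (- a * l)"
    using exponential_distributedD_gt[OF D a l] by simp
  moreover have "measure P {\<omega> \<in> space P. b < X \<omega>} = exp (- b * l)"
    using exponential_distributedD_gt[OF D _ l, of b] a ab by simp
  ultimately show ?thesis by simp
qed

definition Fset :: "'b measure \<Rightarrow> (nat \<Rightarrow> 'b \<Rightarrow> real) \<Rightarrow> nat \<Rightarrow> (nat \<Rightarrow> real) \<Rightarrow> (nat \<Rightarrow> nat) \<Rightarrow> 'b set" where
  "Fset P T k c w = {\<omega> \<in> space P. \<forall>i\<in>{1..k}. T i \<omega> \<in> {real (w i) * c i <.. (real (w i) + 1) * c i}}"

lemma F_prob:
  assumes PS: "prob_space P" and ind: "prob_space.indep_vars P (\<lambda>_. borel) T {1..k}"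
    and D: "\<And>i. i \<in> {1..k} \<Longrightarrow> distributed P lborel (T i) (exponential_density (lam i))"
    and lam: "\<And>i. i \<in> {1..k} \<Longrightarrow> 0 < lam i" and k: "1 \<le> k"
    and c: "\<And>i. i \<in> {1..k} \<Longrightarrow> 0 < c i"
  shows "Fset P T k c w \<in> sets P \<and>
    measure P (Fset P T k c w) = (\<Prod>i\<in>{1..k}. exp (- (c i * lam i)) ^ w i * (1 - exp (- (c i * lam i))))"
proof -
  interpret prob_space P by (rule PS)
  have Tm: "\<And>i. i \<in> {1..k} \<Longrightarrow> T i \<in> borel_measurable P"
    using ind unfolding indep_vars_def by blast
  define A where "A = (\<lambda>i. {real (w i) * c i <.. (real (w i) + 1) * c i})"
  have ne: "{1..k} \<noteq> {}" using k by simp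
  have eq: "Fset P T k c w = (\<Inter>i\<in>{1..k}. T i -` A i \<inter> space P)"
    unfolding Fset_def A_def using ne by auto
  have ms: "Fset P T k c w \<in> sets P"
    unfolding eq using Tm ne by (intro sets.finite_INT) (auto intro!: measurable_sets simp: A_def)
  have "measure P (\<Inter>i\<in>{1..k}. T i -` A i \<inter> space P) = (\<Prod>i\<in>{1..k}. measure P (T i -` A i \<inter> space P))"
    using ne by (intro indep_varsD_finite[OF ind]) (auto simp: A_def)
  also have "\<dots> = (\<Prod>i\<in>{1..k}. exp (- (c i * lam i)) ^ w i * (1 - exp (- (c i * lam i))))"
  proof (rule prod.cong[OF refl])
    fix i assume i: "i \<in> {1..k}"
    have "T i -` A i \<inter> space P = {\<omega> \<in> space P. T i \<omega> \<in> A i}" by auto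
    then have "measure P (T i -` A i \<inter> space P) = exp (- (real (w i) * c i) * lam i) - exp (- ((real (w i) + 1) * c i) * lam i)"
      unfolding A_def using c[OF i] lam[OF i]
      by (simp only:) (rule exp_interval[OF PS D[OF i] lam[OF i] _ _ Tm[OF i]]; simp)
    also have "exp (- (real (w i) * c i) * lam i) = exp (- (c i * lam i)) ^ w i"
      by (simp add: exp_of_nat_mult[symmetric] algebra_simps)
    also have "exp (- ((real (w i) + 1) * c i) * lam i) = exp (- (c i * lam i)) ^ w i * exp (- (c i * lam i))"
      by (simp add: exp_of_nat_mult[symmetric] algebra_simps exp_add[symmetric])
    finally show "measure P (T i -` A i \<inter> space P) = exp (- (c i * lam i)) ^ w i * (1 - exp (- (c i * lam i)))"
      by (simp add: algebra_simps)
  qed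
  finally show ?thesis using ms eq by simp
qed

definition Wg :: "nat \<Rightarrow> site list set" where
  "Wg k = {\<gamma> \<in> walks k. (\<forall>i\<in>{1..k}. Hedge (ed \<gamma> i) \<and> rate (ed \<gamma> i) \<le> sqrt (real i + 1))
       \<and> inj_on (\<lambda>i. \<gamma> ! (i - 1)) {1..k}}"

lemma cnt_pos:
  assumes "finite (S \<inter> {..b})" "S \<inter> {a<..b} \<noteq> {}"
  shows "cnt S a b \<in> {1..}"
proof -
  have "finite (S \<inter> {a<..b})" by (rule finite_subset[OF _ assms(1)]) auto
  then show ?thesis using assms(2) unfolding cnt_def by (simp add: Suc_le_eq card_gt_0_iff)
qed

lemma cnt_zero: "S \<inter> {a<..b} = {} \<Longrightarrow> cnt S a b \<in> {0}"
  unfolding cnt_def by simp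

lemma cover:
  fixes M :: "'a measure" and N :: "site \<times> site \<Rightarrow> 'a \<Rightarrow> real set"
  assumes PF: "indep_poisson_family M N" and k: "1 \<le> k" and t: "0 < t"
    and om: "\<omega> \<in> space M" and y: "y \<in> interface N t \<omega>" and en: "enorm y > real k"
  shows "\<exists>\<gamma>\<in>Wg k. \<exists>w\<in>Wset k k. \<omega> \<in> Eset M N k \<gamma> (t / real k) w"
proof -
  obtain Y S where tp: "tpath N t \<omega> Y S k" and injY: "inj_on Y {0..k}"
    using path_extract[OF y en] by blast
  have T: "Y 0 = (0,0)" "\<forall>l\<le>k. inH (Y l)"
     "\<forall>l<k. nn (Y l) (Y (Suc l)) \<and> 0 < S l \<and> S l \<le> t \<and> S l \<in> N (Y l, Y (Suc l)) \<omega>"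
     "\<forall>l. Suc l < k \<longrightarrow> S l < S (Suc l)"
    using tp unfolding tpath_def by auto
  define \<gamma> where "\<gamma> = map Y [0..<Suc k]"
  have nth: "\<And>i. i \<le> k \<Longrightarrow> \<gamma> ! i = Y i"
    unfolding \<gamma>_def by (subst nth_map_upt) auto
  have edY: "\<And>i. i \<in> {1..k} \<Longrightarrow> ed \<gamma> i = (Y (i - 1), Y i)"
    unfolding ed_def using nth by auto
  have fin: "\<And>e b. Hedge e \<Longrightarrow> finite (N e \<omega> \<inter> {..b})"
    using PF om unfolding indep_poisson_family_def by blast
  have walk: "\<gamma> \<in> walks k"
    unfolding \<gamma>_def by (rule walks_mem) (use T in auto)
  have He: "Hedge (ed \<gamma> i)" if i: "i \<in> {1..k}" for i
  proof -
    have "i - 1 < k" using i by auto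
    then have "nn (Y (i - 1)) (Y (Suc (i - 1)))" using T(3) by blast
    moreover have "Suc (i - 1) = i" using i by auto
    ultimately show ?thesis unfolding Hedge_def edY[OF i] using T(2) i by auto
  qed
  have rt: "rate (ed \<gamma> i) \<le> sqrt (real i + 1)" if i: "i \<in> {1..k}" for i
  proof -
    have "\<bar>fst (Y (i - 1))\<bar> + \<bar>snd (Y (i - 1))\<bar> \<le> int (i - 1)" using tpath_L1[OF tp, of "i - 1"] i by auto
    then have s1: "snd (Y (i - 1)) \<le> int (i - 1)" by linarith
    have "real_of_int (snd (Y (i - 1))) \<le> real i + 1" using s1 i by linarith
    then have a: "sqrt (real_of_int (snd (Y (i - 1)))) \<le> sqrt (real i + 1)" by (rule real_sqrt_le_mono)
    have "sqrt 1 \<le> sqrt (real i + 1)" by (rule real_sqrt_le_mono) simp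
    then have b: "1 \<le> sqrt (real i + 1)" by simp
    show ?thesis unfolding rate_def edY[OF i] using a b by simp
  qed
  have injg: "inj_on (\<lambda>i. \<gamma> ! (i - 1)) {1..k}"
  proof (rule inj_onI)
    fix i j assume i: "i \<in> {1..k}" and j: "j \<in> {1..k}" and e: "\<gamma> ! (i - 1) = \<gamma> ! (j - 1)"
    then have "Y (i - 1) = Y (j - 1)" using nth by auto
    then have "i - 1 = j - 1" using injY i j unfolding inj_on_def by auto
    then show "i = j" using i j by auto
  qed
  have gW: "\<gamma> \<in> Wg k" unfolding Wg_def using walk He rt injg by blast
  define h where "h = t / real k"
  have h: "0 < h" unfolding h_def using t k by simp
  have kh: "real k * h = t" unfolding h_def using k by simp
  obtain w where wW: "w \<in> Wset k k" and wP: "\<forall>i\<in>{1..k}.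
     (0 < w i \<longrightarrow> N (ed \<gamma> i) \<omega> \<inter> {real (Gs w (i - 1)) * h <.. real (Gs w i) * h} = {}) \<and>
     N (ed \<gamma> i) \<omega> \<inter> {real (Gs w i) * h <.. (real (Gs w i) + 1) * h} \<noteq> {}"
  proof -
    have "\<exists>w\<in>Wset k k. \<forall>i\<in>{1..k}.
     (0 < w i \<longrightarrow> N (ed \<gamma> i) \<omega> \<inter> {real (Gs w (i - 1)) * h <.. real (Gs w i) * h} = {}) \<and>
     N (ed \<gamma> i) \<omega> \<inter> {real (Gs w i) * h <.. (real (Gs w i) + 1) * h} \<noteq> {}"
    proof (rule slots[where \<tau>="\<lambda>i. S (i - 1)"])
      show "0 < h" by (rule h)
      show "1 \<le> k" by (rule k)
      fix i assume i: "i \<in> {1..k}"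
      have "Suc (i - 1) = i" using i by auto
      then show "S (i - 1) \<in> N (ed \<gamma> i) \<omega> \<and> 0 < S (i - 1) \<and> S (i - 1) \<le> real k * h"
        using T(3)[rule_format, of "i - 1"] i edY[OF i] kh by auto
    next
      fix i assume "1 \<le> i" "Suc i \<le> k"
      then show "S (i - 1) < S (Suc i - 1)" using T(4)[rule_format, of "i - 1"] by auto
    qed
    then show ?thesis using that by blast
  qed
  have "\<omega> \<in> Eset M N k \<gamma> h w"
    unfolding Eset_def
  proof (intro CollectI conjI ballI)
    show "\<omega> \<in> space M" by (rule om)
    fix x assume x: "x \<in> Ix k w"
    then obtain i where i: "i \<in> {1..k}" and xi: "x = (i, True) \<or> (x = (i, False) \<and> 0 < w i)"
      unfolding Ix_def by auto
    show "cnt (N (fst (fx \<gamma> h w x)) \<omega>) (fst (snd (fx \<gamma> h w x))) (snd (snd (fx \<gamma> h w x))) \<in> Ax x"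
    proof (cases "x = (i, True)")
      case True
      then show ?thesis unfolding fx_def Ax_def
        using cnt_pos[OF fin[OF He[OF i]]] wP i by simp
    next
      case False
      then have "x = (i, False)" "0 < w i" using xi by auto
      then show ?thesis unfolding fx_def Ax_def
        using cnt_zero wP i by simp
    qed
  qed
  then show ?thesis using gW wW unfolding h_def by blast
qed


lemma finite_Wg: "finite (Wg k)"
  by (rule finite_subset[OF _ finite_walks[of k]]) (auto simp: Wg_def)

lemma card_Wg: "card (Wg k) \<le> 4 ^ k"
  by (rule le_trans[OF card_mono[OF finite_walks] card_walks]) (auto simp: Wg_def)

theorem mainTheorem5:
  fixes M :: "'a measure" and N :: "site \<times> site \<Rightarrow> 'a \<Rightarrow> real set"
    and P :: "'b measure" and T :: "nat \<Rightarrow> 'b \<Rightarrow> real"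
    and k :: nat and t :: real
  assumes "prob_space M"
    and "indep_poisson_family M N"
    and "prob_space P"
    and "prob_space.indep_vars P (\<lambda>_. borel) T {1..k}"
    and "\<forall>i \<in> {1..k}. distributed P lborel (T i)
            (exponential_density (4 * sqrt (real i + 1)))"
    and "k \<ge> 1" and "t > 0"
  shows "measure M {\<omega> \<in> space M. \<exists>y \<in> interface N t \<omega>. enorm y > real k}
           \<le> 4 ^ k * measure P {\<omega> \<in> space P. (\<Sum>i = 1..k. T i \<omega>) < t}"
proof -
  note PSM = assms(1) and PF = assms(2) and PSP = assms(3) and ind = assms(4)
    and D = assms(5) and k = assms(6) and t = assms(7)
  interpret MM: prob_space M by (rule PSM)
  interpret PP: prob_space P by (rule PSP)
  define h where "h = t / real k"
  have h: "0 < h" unfolding h_def using t k by simp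
  have kh: "real k * h = t" unfolding h_def using k by simp
  define lam where "lam = (\<lambda>i::nat. 4 * sqrt (real i + 1))"
  have lam: "\<And>i. 0 < lam i" unfolding lam_def by simp
  define W where "W = Wg k"
  define Ws where "Ws = Wset k k"
  define E where "E = (\<lambda>\<gamma> w. Eset M N k \<gamma> h w)"
  define c where "c = (\<lambda>\<gamma> i. rate (ed \<gamma> i) * h / lam i)"
  define F where "F = (\<lambda>\<gamma> w. Fset P T k (c \<gamma>) w)"
  define Pt where "Pt = measure P {\<omega> \<in> space P. (\<Sum>i = 1..k. T i \<omega>) < t}"
  have finW: "finite W" unfolding W_def by (rule finite_Wg)
  have finWs: "finite Ws" unfolding Ws_def by (rule finite_Wset)
  have Tm: "\<And>i. i \<in> {1..k} \<Longrightarrow> T i \<in> borel_measurable P"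
    using ind unfolding PP.indep_vars_def by blast
  have Wprops: "\<And>\<gamma>. \<gamma> \<in> W \<Longrightarrow> (\<forall>i\<in>{1..k}. Hedge (ed \<gamma> i) \<and> rate (ed \<gamma> i) \<le> sqrt (real i + 1))
       \<and> inj_on (\<lambda>i. \<gamma> ! (i - 1)) {1..k}"
    unfolding W_def Wg_def by blast
  have Eprob: "E \<gamma> w \<in> sets M \<and> measure M (E \<gamma> w) =
      (\<Prod>i\<in>{1..k}. exp (- (rate (ed \<gamma> i) * h)) ^ w i * (1 - exp (- (rate (ed \<gamma> i) * h))))"
    if g: "\<gamma> \<in> W" for \<gamma> w
    unfolding E_def by (rule E_prob[OF PSM PF h]) (use Wprops[OF g] in auto)
  have cl: "c \<gamma> i * lam i = rate (ed \<gamma> i) * h" for \<gamma> i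
    unfolding c_def using lam[of i] by simp
  have cpos: "0 < c \<gamma> i" for \<gamma> i
    unfolding c_def using lam[of i] h rate_pos[of "ed \<gamma> i"] by simp
  have Fprob: "F \<gamma> w \<in> sets P \<and> measure P (F \<gamma> w) =
      (\<Prod>i\<in>{1..k}. exp (- (rate (ed \<gamma> i) * h)) ^ w i * (1 - exp (- (rate (ed \<gamma> i) * h))))" for \<gamma> w
  proof -
    have "F \<gamma> w \<in> sets P \<and> measure P (F \<gamma> w) =
      (\<Prod>i\<in>{1..k}. exp (- (c \<gamma> i * lam i)) ^ w i * (1 - exp (- (c \<gamma> i * lam i))))"
      unfolding F_def
    proof (rule F_prob[OF PSP ind _ _ k])
      fix i assume "i \<in> {1..k}"
      then show "distributed P lborel (T i) (exponential_density (lam i))"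
        using D unfolding lam_def by blast
    qed (use lam cpos in auto)
    then show ?thesis unfolding cl .
  qed
  have csmall: "c \<gamma> i \<le> h / 4" if g: "\<gamma> \<in> W" and i: "i \<in> {1..k}" for \<gamma> i
  proof -
    have r: "rate (ed \<gamma> i) \<le> sqrt (real i + 1)" using Wprops[OF g] i by blast
    have sp: "0 < sqrt (real i + 1)" by simp
    have "c \<gamma> i = rate (ed \<gamma> i) * h / (4 * sqrt (real i + 1))" unfolding c_def lam_def ..
    also have "\<dots> \<le> sqrt (real i + 1) * h / (4 * sqrt (real i + 1))"
      using r h sp by (intro divide_right_mono mult_right_mono) auto
    also have "\<dots> = h / 4" using sp by simp
    finally show ?thesis .
  qed
  have Sm: "{\<omega> \<in> space P. (\<Sum>i = 1..k. T i \<omega>) < t} \<in> sets P"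
  proof -
    have "(\<lambda>\<omega>. \<Sum>i = 1..k. T i \<omega>) \<in> borel_measurable P"
      by (rule borel_measurable_sum) (rule Tm)
    then have "(\<lambda>\<omega>. \<Sum>i = 1..k. T i \<omega>) -` {..<t} \<inter> space P \<in> sets P"
      by (rule measurable_sets) simp
    moreover have "(\<lambda>\<omega>. \<Sum>i = 1..k. T i \<omega>) -` {..<t} \<inter> space P = {\<omega> \<in> space P. (\<Sum>i = 1..k. T i \<omega>) < t}"
      by auto
    ultimately show ?thesis by simp
  qed
  have Fsub: "F \<gamma> w \<subseteq> {\<omega> \<in> space P. (\<Sum>i = 1..k. T i \<omega>) < t}" if g: "\<gamma> \<in> W" and w: "w \<in> Ws" for \<gamma> w
  proof
    fix \<omega> assume om: "\<omega> \<in> F \<gamma> w"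
    then have sp: "\<omega> \<in> space P" and Ti: "\<And>i. i \<in> {1..k} \<Longrightarrow> T i \<omega> \<le> (real (w i) + 1) * c \<gamma> i"
      unfolding F_def Fset_def by auto
    have "\<And>i. i \<in> {1..k} \<Longrightarrow> T i \<omega> \<le> (real (w i) + 1) * (h / 4)"
    proof -
      fix i assume i: "i \<in> {1..k}"
      have "(real (w i) + 1) * c \<gamma> i \<le> (real (w i) + 1) * (h / 4)"
        using csmall[OF g i] by (intro mult_left_mono) auto
      then show "T i \<omega> \<le> (real (w i) + 1) * (h / 4)" using Ti[OF i] by linarith
    qed
    then have "(\<Sum>i = 1..k. T i \<omega>) \<le> (\<Sum>i = 1..k. (real (w i) + 1) * (h / 4))"
      by (rule sum_mono)
    also have "\<dots> = (real (sum w {1..k}) + real k) * (h / 4)"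
    proof -
      have "(\<Sum>i = 1..k. (real (w i) + 1) * (h / 4)) = (\<Sum>i = 1..k. (real (w i) + 1)) * (h / 4)"
        by (rule sum_distrib_right[symmetric])
      moreover have "(\<Sum>i = 1..k. (real (w i) + 1)) = real (sum w {1..k}) + real k"
        by (simp add: sum.distrib)
      ultimately show ?thesis by simp
    qed
    also have "\<dots> \<le> (real k - 1 + real k) * (h / 4)"
    proof -
      have "sum w {1..k} \<le> k - 1" using w unfolding Ws_def Wset_def by blast
      then have "real (sum w {1..k}) \<le> real k - 1" using k by linarith
      then show ?thesis using h by (intro mult_right_mono) auto
    qed
    also have "\<dots> = (2 * real k - 1) * h / 4" by (simp add: algebra_simps)
    also have "\<dots> < (4 * real k) * h / 4" using h k by (intro divide_strict_right_mono mult_strict_right_mono) auto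
    also have "\<dots> = real k * h" by simp
    finally show "\<omega> \<in> {\<omega> \<in> space P. (\<Sum>i = 1..k. T i \<omega>) < t}" using sp kh by simp
  qed
  have Fdisj: "disjoint_family_on (F \<gamma>) Ws" for \<gamma>
    unfolding disjoint_family_on_def
  proof (intro ballI impI)
    fix w w' assume w: "w \<in> Ws" and w': "w' \<in> Ws" and ne: "w \<noteq> w'"
    have "\<exists>i\<in>{1..k}. w i \<noteq> w' i"
    proof (rule ccontr)
      assume "\<not> (\<exists>i\<in>{1..k}. w i \<noteq> w' i)"
      then have "\<forall>i\<in>{1..k}. w i = w' i" by blast
      moreover have "w \<in> {1..k} \<rightarrow>\<^sub>E {..<k}" "w' \<in> {1..k} \<rightarrow>\<^sub>E {..<k}"
        using w w' unfolding Ws_def Wset_def by auto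
      ultimately have "w = w'" by (intro PiE_ext) auto
      then show False using ne by simp
    qed
    then obtain i where i: "i \<in> {1..k}" and wi: "w i \<noteq> w' i" by blast
    show "F \<gamma> w \<inter> F \<gamma> w' = {}"
    proof (rule ccontr)
      assume "F \<gamma> w \<inter> F \<gamma> w' \<noteq> {}"
      then obtain \<omega> where o1: "\<omega> \<in> F \<gamma> w" and o2: "\<omega> \<in> F \<gamma> w'" by blast
      have a: "real (w i) * c \<gamma> i < T i \<omega>" "T i \<omega> \<le> (real (w i) + 1) * c \<gamma> i"
        using o1 i unfolding F_def Fset_def by auto
      have b: "real (w' i) * c \<gamma> i < T i \<omega>" "T i \<omega> \<le> (real (w' i) + 1) * c \<gamma> i"
        using o2 i unfolding F_def Fset_def by auto
      have cp: "0 < c \<gamma> i" by (rule cpos)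
      show False
      proof (cases "w i < w' i")
        case True
        then have "real (w i) + 1 \<le> real (w' i)" by linarith
        then have "(real (w i) + 1) * c \<gamma> i \<le> real (w' i) * c \<gamma> i" using cp by (intro mult_right_mono) auto
        then show False using a b by linarith
      next
        case False
        then have "real (w' i) + 1 \<le> real (w i)" using wi by linarith
        then have "(real (w' i) + 1) * c \<gamma> i \<le> real (w i) * c \<gamma> i" using cp by (intro mult_right_mono) auto
        then show False using a b by linarith
      qed
    qed
  qed
  have perg: "(\<Sum>w\<in>Ws. measure M (E \<gamma> w)) \<le> Pt" if g: "\<gamma> \<in> W" for \<gamma>
  proof -
    have "(\<Sum>w\<in>Ws. measure M (E \<gamma> w)) = (\<Sum>w\<in>Ws. measure P (F \<gamma> w))"
      using Eprob[OF g] Fprob by simp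
    also have "\<dots> = measure P (\<Union>w\<in>Ws. F \<gamma> w)"
      by (rule measure_finite_Union[symmetric, OF finWs _ Fdisj]) (use Fprob in auto)
    also have "\<dots> \<le> Pt" unfolding Pt_def
      by (rule PP.finite_measure_mono[OF _ Sm]) (use Fsub[OF g] in blast)
    finally show ?thesis .
  qed
  have cov: "{\<omega> \<in> space M. \<exists>y \<in> interface N t \<omega>. enorm y > real k} \<subseteq> (\<Union>\<gamma>\<in>W. \<Union>w\<in>Ws. E \<gamma> w)"
  proof
    fix \<omega> assume "\<omega> \<in> {\<omega> \<in> space M. \<exists>y \<in> interface N t \<omega>. enorm y > real k}"
    then obtain y where om: "\<omega> \<in> space M" and y: "y \<in> interface N t \<omega>" and en: "enorm y > real k" by blast
    show "\<omega> \<in> (\<Union>\<gamma>\<in>W. \<Union>w\<in>Ws. E \<gamma> w)"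
      using cover[OF PF k t om y en] unfolding W_def Ws_def E_def h_def by blast
  qed
  have Em: "\<And>\<gamma>. \<gamma> \<in> W \<Longrightarrow> (\<Union>w\<in>Ws. E \<gamma> w) \<in> sets M"
    using Eprob finWs by (intro sets.finite_UN) auto
  have Um: "(\<Union>\<gamma>\<in>W. \<Union>w\<in>Ws. E \<gamma> w) \<in> sets M"
    by (rule sets.finite_UN[OF finW Em])
  have "measure M {\<omega> \<in> space M. \<exists>y \<in> interface N t \<omega>. enorm y > real k} \<le> measure M (\<Union>\<gamma>\<in>W. \<Union>w\<in>Ws. E \<gamma> w)"
    by (rule MM.finite_measure_mono[OF cov Um])
  also have "\<dots> \<le> (\<Sum>\<gamma>\<in>W. measure M (\<Union>w\<in>Ws. E \<gamma> w))"
    by (rule MM.finite_measure_subadditive_finite[OF finW]) (use Em in auto)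
  also have "\<dots> \<le> (\<Sum>\<gamma>\<in>W. \<Sum>w\<in>Ws. measure M (E \<gamma> w))"
  proof (rule sum_mono)
    fix \<gamma> assume g: "\<gamma> \<in> W"
    show "measure M (\<Union>w\<in>Ws. E \<gamma> w) \<le> (\<Sum>w\<in>Ws. measure M (E \<gamma> w))"
      by (rule MM.finite_measure_subadditive_finite[OF finWs]) (use Eprob[OF g] in auto)
  qed
  also have "\<dots> \<le> (\<Sum>\<gamma>\<in>W. Pt)" by (rule sum_mono) (rule perg)
  also have "\<dots> = real (card W) * Pt" by simp
  also have "\<dots> \<le> 4 ^ k * Pt"
  proof (rule mult_right_mono)
    have "card W \<le> 4 ^ k" unfolding W_def by (rule card_Wg)
    then show "real (card W) \<le> 4 ^ k" by (metis of_nat_le_iff of_nat_numeral of_nat_power)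
    show "0 \<le> Pt" unfolding Pt_def by simp
  qed
  finally show ?thesis unfolding Pt_def .
qed

end
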